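(* Let $0<\alpha<1$, $\sigma>0$, $N_1$ a positive integer, $h=\sigma^2\alpha^2$, $T=\sigma\alpha\sqrt{N_1}$, $\kappa=\frac\alpha{1-\alpha}$, and let $n\ge1$ be an integer. For $x\in(0,1]$ and complex $u\notin(-\infty,0]$ let $$f(u,x)=\frac{\sin(\alpha\pi)}{\alpha\pi}\frac{1}{2\sqrt u}\frac{xe^{\sqrt u-T}}{e^{\frac1\alpha(\sqrt u-T)}+x}$$ (principal branch of $\sqrt u$). Let $u^*=\frac{1+(1-2\alpha)\sqrt{4\alpha-4\alpha^2+1}}{2(1-\alpha)^2}$, $\gamma=\alpha\log\!\Big(\frac{\frac1\kappa\sqrt{u^*}+1}{\sqrt{u^*}-1}\Big)+\sqrt{u^*}$, $x^*=e^{\frac1\alpha(\gamma-T)}$, $M_0=2\max\left\{\frac{\sigma^2}{4},1+\mathrm{ceil}\!\left(\frac{9\pi^2}{\sigma^2}\right),2\,\mathrm{ceil}\!\left[\left(1+\sqrt{\pi/\sigma}\right)^4\right]\right\}$, and $\Upsilon=\{x\in[x^*,1]:(T+\alpha\log x)^2-\alpha^2\pi^2>M_0h\}$. For $x\in\Upsilon$ put $a=2\alpha\pi(T+\alpha\log x)$ and $u_0=(T+\alpha\log x)^2-\alpha^2\pi^2-ia$. Let $N_0>0$ be a fixed sufficiently large number, $\rho_0=\frac12\min\{\alpha^2\pi^2,2\pi\alpha\gamma,h/N_0\}$, and for $0<\rho\le\rho_0$ let $C^{\pm}_\rho=\{z=u_0+\rho e^{i\theta}:\theta:0\to\pm2\pi\}$.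 Then for arbitrary $\rho\in(0,\rho_0]$ it holds uniformly for $x\in\Upsilon$ that $$\left|\int_{C^{\pm}_\rho}f(u,x)e^{-i\frac{2n\pi}{h}u}\,\mathrm{d}u\right|=e^{(\rho-a)\frac{2n\pi}{h}}x^\alpha\,\mathcal{O}(1)$$ as $T\to+\infty$, where the constant in $\mathcal{O}(1)$ is independent of $x$, $h$, $\alpha$, $\sigma$, $\rho$ and $T$.
   Context: $\mathrm{ceil}(y)$ is the least integer $\ge y$. $u_0$ is a simple pole of $u\mapsto f(u,x)$. *)

theory Defs
  imports "HOL-Complex_Analysis.Complex_Analysis"
begin

definition fA2 :: "real \<Rightarrow> real \<Rightarrow> complex \<Rightarrow> real \<Rightarrow> complex" where
  "fA2 \<alpha> T u x =
     complex_of_real (sin (\<alpha> * pi) / (\<alpha> * pi)) * (1 / (2 * csqrt u)) *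
     (complex_of_real x * exp (csqrt u - complex_of_real T)) /
     (exp ((csqrt u - complex_of_real T) / complex_of_real \<alpha>) + complex_of_real x)"

definition ustarA2 :: "real \<Rightarrow> real" where
  "ustarA2 \<alpha> = (1 + (1 - 2*\<alpha>) * sqrt (4*\<alpha> - 4*\<alpha>^2 + 1)) / (2 * (1 - \<alpha>)^2)"

definition kappaA2 :: "real \<Rightarrow> real" where
  "kappaA2 \<alpha> = \<alpha> / (1 - \<alpha>)"

definition gammaA2 :: "real \<Rightarrow> real" where
  "gammaA2 \<alpha> = \<alpha> * ln (((1 / kappaA2 \<alpha>) * sqrt (ustarA2 \<alpha>) + 1) / (sqrt (ustarA2 \<alpha>) - 1))
                 + sqrt (ustarA2 \<alpha>)"

definition xstarA2 :: "real \<Rightarrow> real \<Rightarrow> real" where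
  "xstarA2 \<alpha> T = exp ((1 / \<alpha>) * (gammaA2 \<alpha> - T))"

definition M0A2 :: "real \<Rightarrow> real" where
  "M0A2 \<sigma> = 2 * Max {\<sigma>^2 / 4,
                       1 + real_of_int (ceiling (9 * pi^2 / \<sigma>^2)),
                       2 * real_of_int (ceiling ((1 + sqrt (pi / \<sigma>)) ^ 4))}"

definition UpsilonA2 :: "real \<Rightarrow> real \<Rightarrow> real \<Rightarrow> real \<Rightarrow> real set" where
  "UpsilonA2 \<alpha> \<sigma> T h =
     {x. xstarA2 \<alpha> T \<le> x \<and> x \<le> 1 \<and> (T + \<alpha> * ln x)^2 - \<alpha>^2 * pi^2 > M0A2 \<sigma> * h}"

definition rho0A2 :: "real \<Rightarrow> real \<Rightarrow> real \<Rightarrow> real" where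
  "rho0A2 \<alpha> h N0 = (1/2) * Min {\<alpha>^2 * pi^2, 2 * pi * \<alpha> * gammaA2 \<alpha>, h / N0}"

end

theory Submission
  imports Defs
begin

lemma circ_neg:
  "part_circlepath z r 0 (-1 * 2 * pi) = reversepath (circlepath z r)"
proof
  fix t
  have "exp (\<i> * complex_of_real ((1 - t) * (2 * pi))) = exp (\<i> * complex_of_real (- (t * (2*pi))))"
  proof -
    have "\<i> * complex_of_real ((1 - t) * (2 * pi)) = \<i> * complex_of_real (- (t * (2*pi))) + 2 * pi * \<i>"
      by (simp add: algebra_simps)
    then show ?thesis by (simp add: exp_add exp_diff exp_minus divide_inverse)
  qed
  then show "part_circlepath z r 0 (-1 * 2 * pi) t = reversepath (circlepath z r) t"
    by (simp add: circlepath_def part_circlepath_def linepath_def reversepath_def)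
qed

lemma sep:
  fixes \<alpha> T x L :: real and u :: complex
  assumes a0: "0 < \<alpha>" and x0: "0 < x" and L: "L = T + \<alpha> * ln x"
    and D0: "exp ((csqrt u - complex_of_real T) / complex_of_real \<alpha>) + complex_of_real x = 0"
  shows "\<exists>n::int. csqrt u = complex_of_real L + \<i> * complex_of_real (\<alpha> * pi * (2 * n + 1))"
proof -
  have "exp ((csqrt u - complex_of_real T) / complex_of_real \<alpha>) = exp (complex_of_real (ln x) + \<i> * pi)"
    using D0 x0 by (simp add: exp_add exp_of_real add_eq_0_iff)
  then obtain n :: int where n: "(csqrt u - complex_of_real T) / complex_of_real \<alpha> = complex_of_real (ln x) + \<i> * pi + of_int (2*n) * pi * \<i>"
    by (auto simp: exp_eq)
  then have "csqrt u - complex_of_real T = complex_of_real \<alpha> * (complex_of_real (ln x) + \<i> * pi + of_int (2*n) * pi * \<i>)"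
    using a0 by (simp add: divide_eq_eq mult.commute)
  then show ?thesis
    by (intro exI[of _ n]) (simp add: L algebra_simps complex_eq_iff)
qed

lemma core:
  fixes \<alpha> T x L \<rho> k s :: real
  assumes a0: "0 < \<alpha>" and a1: "\<alpha> < 1" and x0: "0 < x" and L: "L = T + \<alpha> * ln x"
    and big: "L^2 - \<alpha>^2 * pi^2 > \<alpha>^2 * pi^2" and r0: "0 < \<rho>" and r1: "2 * \<rho> \<le> \<alpha>^2 * pi^2"
    and k0: "0 < k" and s: "s \<in> {1, -1}"
  shows "norm (contour_integral (part_circlepath
            (complex_of_real (L^2 - \<alpha>^2 * pi^2) - \<i> * complex_of_real (2 * \<alpha> * pi * L)) \<rho> 0 (s * 2 * pi))
           (\<lambda>u. fA2 \<alpha> T u x * exp (- \<i> * complex_of_real k * u)))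
         \<le> 2 * exp ((\<rho> - 2 * \<alpha> * pi * L) * k) * x powr \<alpha>"
proof -
  define a where "a = 2 * \<alpha> * pi * L"
  define u0 where "u0 = complex_of_real (L^2 - \<alpha>^2 * pi^2) - \<i> * complex_of_real a"
  define S where "S = ball u0 (2 * \<rho>)"
  define D where "D = (\<lambda>u. exp ((csqrt u - complex_of_real T) / complex_of_real \<alpha>) + complex_of_real x)"
  define F where "F = (\<lambda>u. fA2 \<alpha> T u x * exp (- \<i> * complex_of_real k * u))"
  define g where "g = part_circlepath u0 \<rho> 0 (s * 2 * pi)"
  have Re_pos: "Re u > 0" if "u \<in> S" for u
  proof -
    have "norm (u - u0) < 2 * \<rho>" using that by (simp add: S_def dist_norm norm_minus_commute)
    moreover have "\<bar>Re (u - u0)\<bar> \<le> norm (u - u0)" by (rule abs_Re_le_cmod)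
    moreover have "Re u0 = L^2 - \<alpha>^2 * pi^2" by (simp add: u0_def)
    moreover have "\<alpha>^2 * pi^2 > 0" using a0 by simp
    moreover have "Re (u - u0) = Re u - Re u0" by simp
    ultimately show ?thesis using big r1 by linarith
  qed
  have nonpos: "u \<notin> \<real>\<^sub>\<le>\<^sub>0" if "u \<in> S" for u
    using Re_pos[OF that] by (auto simp: complex_nonpos_Reals_iff)
  have Lsq: "\<alpha> * pi < \<bar>L\<bar>"
  proof -
    have P: "0 < \<alpha>^2*pi^2" using a0 by simp
    have "(\<alpha> * pi)^2 = \<alpha>^2*pi^2" by (simp add: power_mult_distrib)
    then have "(\<alpha> * pi)^2 < L^2" using big P by linarith
    then have "(\<alpha> * pi)^2 < \<bar>L\<bar>^2" by simp
    then show ?thesis by (rule power_less_imp_less_base) simp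
  qed
  have zeros: "L > 0 \<and> u = u0" if uS: "u \<in> S" and Du: "D u = 0" for u
  proof -
    obtain n :: int where n: "csqrt u = complex_of_real L + \<i> * complex_of_real (\<alpha> * pi * (2 * real_of_int n + 1))"
      using sep[OF a0 x0 L Du[unfolded D_def]] by blast
    have "Re (csqrt u) = L" using n by simp
    then have "L \<ge> 0" using Re_csqrt[of u] by simp
    moreover have "0 < \<alpha> * pi" using a0 by simp
    then have "L \<noteq> 0" using Lsq by auto
    ultimately have Lp: "L > 0" by simp
    define w0 where "w0 = complex_of_real L - \<i> * complex_of_real (\<alpha> * pi)"
    have u0w: "u0 = w0^2" by (simp add: u0_def w0_def a_def complex_eq_iff power2_eq_square algebra_simps)
    have uw: "u = (csqrt u)^2" by simp
    have "u = u0"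
    proof (rule ccontr)
      assume ne: "u \<noteq> u0"
      have nn: "n \<noteq> -1"
      proof
        assume "n = -1"
        then have "csqrt u = w0" using n by (simp add: w0_def complex_eq_iff)
        then have "u = u0" using uw u0w by metis
        then show False using ne by simp
      qed
      have d1: "csqrt u - w0 = \<i> * complex_of_real (\<alpha> * pi * (2 * real_of_int n + 2))"
        using n by (simp add: w0_def complex_eq_iff algebra_simps)
      have d2: "csqrt u + w0 = complex_of_real (2 * L) + \<i> * complex_of_real (\<alpha> * pi * (2 * real_of_int n))"
        using n by (simp add: w0_def complex_eq_iff algebra_simps)
      have "1 \<le> \<bar>real_of_int n + 1\<bar>" using nn by linarith
      then have "2 * (\<alpha> * pi) \<le> \<alpha> * pi * \<bar>2 * real_of_int n + 2\<bar>"
        using a0 by (simp add: abs_mult)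
      also have "\<dots> = norm (csqrt u - w0)" using a0 by (simp only: d1 norm_mult norm_ii norm_of_real) (simp add: abs_mult)
      finally have N1: "2 * (\<alpha> * pi) \<le> norm (csqrt u - w0)" .
      have "2 * L \<le> norm (csqrt u + w0)"
        using abs_Re_le_cmod[of "csqrt u + w0"] d2 Lp by simp
      then have N2: "2 * (\<alpha> * pi) \<le> norm (csqrt u + w0)" using Lsq Lp by linarith
      have "norm (u - u0) = norm (csqrt u - w0) * norm (csqrt u + w0)"
        by (subst uw, subst u0w) (simp add: power2_eq_square algebra_simps norm_mult[symmetric])
      also have "\<dots> \<ge> (2 * (\<alpha> * pi)) * (2 * (\<alpha> * pi))"
        using N1 N2 a0 by (intro mult_mono) auto
      finally have "4 * (\<alpha>^2 * pi^2) \<le> norm (u - u0)" by (simp add: power2_eq_square algebra_simps)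
      moreover have "norm (u - u0) < 2 * \<rho>" using uS by (simp add: S_def dist_norm norm_minus_commute)
      moreover have "0 < \<alpha>^2 * pi^2" using a0 by simp
      ultimately show False using r1 by linarith
    qed
    then show ?thesis using Lp by simp
  qed
  have path_sub: "path_image g \<subseteq> S"
  proof -
    have "path_image g \<subseteq> sphere u0 \<rho>" unfolding g_def using r0 by (intro path_image_part_circlepath_subset') simp
    also have "sphere u0 \<rho> \<subseteq> S" using r0 by (auto simp: S_def)
    finally show ?thesis .
  qed
  have closed_g: "pathfinish g = pathstart g"
  proof -
    have e: "exp (\<i> * (2 * complex_of_real pi)) = 1" using exp_two_pi_i by (simp add: mult.commute)
    have "exp (\<i> * complex_of_real (s * 2 * pi)) = 1" using s by (auto simp: e exp_minus)
    then show ?thesis by (simp add: g_def)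
  qed
  have Lne: "L \<noteq> 0" using Lsq a0 by (metis abs_zero mult_pos_pos not_less_iff_gr_or_eq pi_gt_zero)
  have holo: "F holomorphic_on V" if VS: "V \<subseteq> S" and DV: "\<forall>u\<in>V. D u \<noteq> 0" for V
  proof -
    have "0 \<notin> V" using VS nonpos[of 0] by auto
    then show ?thesis
      unfolding F_def fA2_def using VS DV nonpos by (auto simp: D_def intro!: holomorphic_intros)
  qed
  have oS: "open S" and u0S: "u0 \<in> S" using r0 by (auto simp: S_def)
  show ?thesis
  proof (cases "L < 0")
    case True
    then have "\<forall>u\<in>S. D u \<noteq> 0" using zeros by force
    then have "F holomorphic_on S" by (intro holo) auto
    then have "(F has_contour_integral 0) g"
      using path_sub closed_g by (intro Cauchy_theorem_convex_simple) (auto simp: S_def g_def)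
    then have "contour_integral g F = 0" by (rule contour_integral_unique)
    then show ?thesis by (simp add: F_def g_def u0_def a_def)
  next
    case False
    then have Lp: "L > 0" using Lne by simp
    define w0 where "w0 = complex_of_real L - \<i> * complex_of_real (\<alpha> * pi)"
    have u0w: "u0 = w0^2" by (simp add: u0_def w0_def a_def complex_eq_iff power2_eq_square algebra_simps)
    have cs: "csqrt u0 = w0" unfolding u0w by (rule csqrt_square) (simp add: w0_def Lp)
    have w0ne: "w0 \<noteq> 0" using Lp by (auto simp: w0_def complex_eq_iff)
    have E0: "exp ((w0 - complex_of_real T) / complex_of_real \<alpha>) = - complex_of_real x"
    proof -
      have "(w0 - complex_of_real T) / complex_of_real \<alpha> = complex_of_real (ln x) - \<i> * pi"
        using a0 by (simp add: w0_def L complex_eq_iff field_simps)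
      then show ?thesis using x0 by (simp add: exp_diff exp_of_real)
    qed
    have Du0: "D u0 = 0" by (simp add: D_def cs E0)
    define c where "c = complex_of_real (sin (\<alpha> * pi) / (\<alpha> * pi))"
    define N where "N = (\<lambda>u. c * (1 / (2 * csqrt u)) * (complex_of_real x * exp (csqrt u - complex_of_real T)) * exp (- \<i> * complex_of_real k * u))"
    have FND: "F = (\<lambda>u. N u / D u)" by (simp add: F_def fA2_def N_def D_def c_def fun_eq_iff)
    have "0 \<notin> S" using nonpos[of 0] by auto
    then have Nh: "N holomorphic_on S" unfolding N_def using nonpos by (auto intro!: holomorphic_intros)
    have Dh: "D holomorphic_on S" unfolding D_def using nonpos a0 by (auto intro!: holomorphic_intros)
    define D' where "D' = exp ((w0 - complex_of_real T) / complex_of_real \<alpha>) * (inverse (2 * w0) / complex_of_real \<alpha>)"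
    have Dd: "(D has_field_derivative D') (at u0)"
    proof -
      have hc: "(csqrt has_field_derivative inverse (2 * csqrt u0)) (at u0)"
        by (rule has_field_derivative_csqrt) (use nonpos u0S in simp)
      have "((\<lambda>u. csqrt u - complex_of_real T) has_field_derivative inverse (2 * csqrt u0) - 0) (at u0)"
        by (rule DERIV_diff[OF hc DERIV_const])
      then have "((\<lambda>u. (csqrt u - complex_of_real T) / complex_of_real \<alpha>) has_field_derivative (inverse (2 * csqrt u0) - 0) / complex_of_real \<alpha>) (at u0)"
        by (rule DERIV_cdivide)
      then have "((\<lambda>u. exp ((csqrt u - complex_of_real T) / complex_of_real \<alpha>)) has_field_derivative
          exp ((csqrt u0 - complex_of_real T) / complex_of_real \<alpha>) * ((inverse (2 * csqrt u0) - 0) / complex_of_real \<alpha>)) (at u0)"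
        by (rule DERIV_chain2[OF DERIV_exp])
      then have "(D has_field_derivative
          exp ((csqrt u0 - complex_of_real T) / complex_of_real \<alpha>) * ((inverse (2 * csqrt u0) - 0) / complex_of_real \<alpha>) + 0) (at u0)"
        unfolding D_def by (rule DERIV_add[OF _ DERIV_const])
      then show ?thesis by (simp add: D'_def cs)
    qed
    have D'ne: "D' \<noteq> 0" using x0 w0ne a0 by (simp add: D'_def E0)
    have sinpos: "sin (\<alpha> * pi) > 0" using a0 a1 by (intro sin_gt_zero) auto
    have Nne: "N u0 \<noteq> 0" using sinpos w0ne x0 a0 by (simp add: N_def c_def cs)
    have res: "residue F u0 = N u0 / D'"
      unfolding FND using Nh Dh oS u0S Dd Nne Du0 D'ne
      by (intro residue_simple_pole_deriv) (auto simp: S_def intro: convex_connected)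
    have holS: "F holomorphic_on (S - {u0})" using zeros by (intro holo) auto
    have "(F has_contour_integral 2 * pi * \<i> * residue F u0) (circlepath u0 \<rho>)"
      using oS u0S r0 holS by (intro base_residue) (auto simp: S_def)
    then have ci: "contour_integral (circlepath u0 \<rho>) F = 2 * pi * \<i> * residue F u0"
      by (rule contour_integral_unique)
    have ng: "norm (contour_integral g F) = norm (2 * pi * \<i> * residue F u0)"
      using s
    proof
      assume "s = 1"
      then have "g = circlepath u0 \<rho>" by (simp add: g_def circlepath_def)
      then show ?thesis by (simp add: ci)
    next
      assume "s \<in> {-1}"
      then have "g = reversepath (circlepath u0 \<rho>)" using circ_neg by (simp add: g_def)
      then show ?thesis by (simp add: contour_integral_reversepath ci)
    qed
    have R: "N u0 / D' = - (c * complex_of_real \<alpha> * exp (w0 - complex_of_real T) * exp (- \<i> * complex_of_real k * u0))"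
      using x0 w0ne a0 by (simp add: N_def D'_def E0 cs field_simps)
    have n1: "norm (exp (w0 - complex_of_real T)) = x powr \<alpha>"
      using x0 by (simp add: norm_exp_eq_Re w0_def L powr_def)
    have n2: "norm (exp (- \<i> * complex_of_real k * u0)) = exp (- k * a)"
      by (simp add: norm_exp_eq_Re u0_def)
    have nc: "norm c = sin (\<alpha> * pi) / (\<alpha> * pi)"
      unfolding c_def norm_of_real using sinpos a0 by simp
    have n3: "norm c * \<alpha> * pi \<le> 1"
      using a0 sin_le_one[of "\<alpha> * pi"] by (simp add: nc)
    have "norm (contour_integral g F) = 2 * (norm c * \<alpha> * pi) * x powr \<alpha> * exp (- k * a)"
    proof -
      have e1: "exp (Re w0 - T) = x powr \<alpha>" using n1 by (simp add: norm_exp_eq_Re)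
      have e2: "exp (k * Im u0) = exp (- (k * a))" using n2 by (simp add: norm_exp_eq_Re)
      show ?thesis unfolding ng res R using a0 by (simp add: norm_mult e1 e2)
    qed
    also have "\<dots> \<le> 2 * 1 * x powr \<alpha> * exp ((\<rho> - a) * k)"
      using n3 r0 k0 a0 by (intro mult_mono) (auto simp: algebra_simps)
    finally show ?thesis by (simp add: F_def g_def u0_def a_def mult_ac)
  qed
qed


theorem lemmaA2:
  fixes n :: nat
  assumes "n \<ge> 1"
  shows "\<exists>N0bar>0. \<forall>N0\<ge>N0bar. \<exists>C. \<forall>\<alpha> \<sigma>::real. 0 < \<alpha> \<and> \<alpha> < 1 \<and> 0 < \<sigma> \<longrightarrow>
     (\<exists>T0. \<forall>(N1::nat) (\<rho>::real) (x::real) (s::real).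
        let h = \<sigma>^2 * \<alpha>^2; T = \<sigma> * \<alpha> * sqrt (real N1);
            a = 2 * \<alpha> * pi * (T + \<alpha> * ln x);
            u0 = complex_of_real ((T + \<alpha> * ln x)^2 - \<alpha>^2 * pi^2) - \<i> * complex_of_real a
        in (N1 \<ge> 1 \<and> T \<ge> T0 \<and> 0 < \<rho> \<and> \<rho> \<le> rho0A2 \<alpha> h N0 \<and> x \<in> UpsilonA2 \<alpha> \<sigma> T h
            \<and> s \<in> {1, -1}) \<longrightarrow>
           norm (contour_integral (part_circlepath u0 \<rho> 0 (s * 2 * pi))
              (\<lambda>u. fA2 \<alpha> T u x * exp (- \<i> * complex_of_real (2 * real n * pi / h) * u)))
           \<le> C * exp ((\<rho> - a) * (2 * real n * pi / h)) * x powr \<alpha>)"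
proof (rule exI[of _ "1::real"], rule conjI, simp, intro allI impI)
  fix N0 :: real
  assume "1 \<le> N0"
  show "\<exists>C. \<forall>\<alpha> \<sigma>::real. 0 < \<alpha> \<and> \<alpha> < 1 \<and> 0 < \<sigma> \<longrightarrow>
     (\<exists>T0. \<forall>(N1::nat) (\<rho>::real) (x::real) (s::real).
        let h = \<sigma>^2 * \<alpha>^2; T = \<sigma> * \<alpha> * sqrt (real N1);
            a = 2 * \<alpha> * pi * (T + \<alpha> * ln x);
            u0 = complex_of_real ((T + \<alpha> * ln x)^2 - \<alpha>^2 * pi^2) - \<i> * complex_of_real a
        in (N1 \<ge> 1 \<and> T \<ge> T0 \<and> 0 < \<rho> \<and> \<rho> \<le> rho0A2 \<alpha> h N0 \<and> x \<in> UpsilonA2 \<alpha> \<sigma> T h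
            \<and> s \<in> {1, -1}) \<longrightarrow>
           norm (contour_integral (part_circlepath u0 \<rho> 0 (s * 2 * pi))
              (\<lambda>u. fA2 \<alpha> T u x * exp (- \<i> * complex_of_real (2 * real n * pi / h) * u)))
           \<le> C * exp ((\<rho> - a) * (2 * real n * pi / h)) * x powr \<alpha>)"
  proof (rule exI[of _ 2], intro allI impI, rule exI[of _ 0], intro allI)
  fix \<alpha> \<sigma> :: real and N1 :: nat and \<rho> x s :: real
  assume as: "0 < \<alpha> \<and> \<alpha> < 1 \<and> 0 < \<sigma>"
  then have a0: "0 < \<alpha>" and a1: "\<alpha> < 1" and s0: "0 < \<sigma>" by auto
  define h where "h = \<sigma>^2 * \<alpha>^2"
  define T where "T = \<sigma> * \<alpha> * sqrt (real N1)"
  define L where "L = T + \<alpha> * ln x"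
  define k where "k = 2 * real n * pi / h"
  have h0: "h > 0" using a0 s0 by (simp add: h_def)
  have k0: "k > 0" using assms h0 by (simp add: k_def)
  show "let h = \<sigma>^2 * \<alpha>^2; T = \<sigma> * \<alpha> * sqrt (real N1);
            a = 2 * \<alpha> * pi * (T + \<alpha> * ln x);
            u0 = complex_of_real ((T + \<alpha> * ln x)^2 - \<alpha>^2 * pi^2) - \<i> * complex_of_real a
        in (N1 \<ge> 1 \<and> T \<ge> 0 \<and> 0 < \<rho> \<and> \<rho> \<le> rho0A2 \<alpha> h N0 \<and> x \<in> UpsilonA2 \<alpha> \<sigma> T h
            \<and> s \<in> {1, -1}) \<longrightarrow>
           norm (contour_integral (part_circlepath u0 \<rho> 0 (s * 2 * pi))
              (\<lambda>u. fA2 \<alpha> T u x * exp (- \<i> * complex_of_real (2 * real n * pi / h) * u)))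
           \<le> 2 * exp ((\<rho> - a) * (2 * real n * pi / h)) * x powr \<alpha>"
    unfolding Let_def h_def[symmetric] T_def[symmetric] L_def[symmetric] k_def[symmetric]
  proof (intro impI)
    assume H: "1 \<le> N1 \<and> 0 \<le> T \<and> 0 < \<rho> \<and> \<rho> \<le> rho0A2 \<alpha> h N0 \<and> x \<in> UpsilonA2 \<alpha> \<sigma> T h \<and> s \<in> {1, -1}"
    have r0: "0 < \<rho>" and s: "s \<in> {1, -1}" using H by auto
    have "\<rho> \<le> (1/2) * Min {\<alpha>^2 * pi^2, 2 * pi * \<alpha> * gammaA2 \<alpha>, h / N0}"
      using H by (simp add: rho0A2_def)
    also have "Min {\<alpha>^2 * pi^2, 2 * pi * \<alpha> * gammaA2 \<alpha>, h / N0} \<le> \<alpha>^2 * pi^2" by (rule Min_le) auto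
    finally have r1: "2 * \<rho> \<le> \<alpha>^2 * pi^2" by simp
    have xU: "xstarA2 \<alpha> T \<le> x" and bigM: "(T + \<alpha> * ln x)^2 - \<alpha>^2 * pi^2 > M0A2 \<sigma> * h"
      using H by (auto simp: UpsilonA2_def)
    have x0: "0 < x" using xU by (smt (verit) exp_gt_zero xstarA2_def)
    define q where "q = 9 * pi^2 / \<sigma>^2"
    have A: "2 * (1 + real_of_int (ceiling q)) \<le> M0A2 \<sigma>"
      unfolding M0A2_def q_def by (intro mult_left_mono Max_ge) auto
    have B: "q \<le> real_of_int (ceiling q)" by (rule le_of_int_ceiling)
    define cq where "cq = real_of_int (ceiling q)"
    have B2: "2 * q \<le> 2 * (1 + cq)" using B unfolding cq_def[symmetric] by simp
    have C: "2 * q \<le> M0A2 \<sigma>" using order_trans[OF B2 A[unfolded cq_def[symmetric]]] .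
    then have "2 * q * h \<le> M0A2 \<sigma> * h" using h0 by (intro mult_right_mono) auto
    moreover have "2 * q * h = 18 * (\<alpha>^2 * pi^2)" using s0 by (simp add: q_def h_def field_simps)
    moreover have "0 < \<alpha>^2 * pi^2" using a0 by simp
    ultimately have big: "L^2 - \<alpha>^2 * pi^2 > \<alpha>^2 * pi^2" using bigM unfolding L_def by linarith
    show "norm (contour_integral (part_circlepath (complex_of_real (L^2 - \<alpha>^2 * pi^2) - \<i> * complex_of_real (2 * \<alpha> * pi * L)) \<rho> 0 (s * 2 * pi))
              (\<lambda>u. fA2 \<alpha> T u x * exp (- \<i> * complex_of_real k * u)))
           \<le> 2 * exp ((\<rho> - 2 * \<alpha> * pi * L) * k) * x powr \<alpha>"
      by (rule core[OF a0 a1 x0 L_def big r0 r1 k0 s])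
  qed
qed
qed

end
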